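(* Let $P$ be a finite ranked poset with rank function $r$, let $P^*\subseteq P$ be a set of marked elements with $\min(P)\cup\max(P)\subseteq P^*$, and let $\lambda^r\colon P^*\to\mathbb{Z}$ be given by $\lambda^r(a)=r(a)$. Let $\mathbf{r}\in\mathbb{R}^{P\setminus P^*}$ be the point with coordinates $r_p=r(p)$. Then $\mathbf{r}$ is the unique interior lattice point of the marked order polytope $\mathcal{O}(P,\lambda^r)$, regarded as a subset of $\mathbb{R}^{P\setminus P^*}$.
   Context: A rank function on a poset $P$ is a map $r\colon P\to\mathbb{Z}$ with $r(p)=r(q)-1$ for every covering relation $p\prec q$; $P$ is ranked if it has one. The marked order polytope $\mathcal{O}(P,\lambda)$, for an order-preserving $\lambda\colon P^*\to\mathbb{R}$, is the set of $\mathbf{x}\in\mathbb{R}^P$ with $x_a=\lambda(a)$ for $a\in P^*$ and $x_p\le x_q$ for every covering relation $p\prec q$ in $P$; it is regarded as a subset of $\mathbb{R}^{P\setminus P^*}$ via projection onto the unmarked coordinates, and "interior" refers to the interior in $\mathbb{R}^{P\setminus P^*}$. A lattice point is a point of $\mathbb{Z}^{P\setminus P^*}$. *)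

theory Defs
  imports "HOL-Analysis.Analysis"
begin

definition covers :: "'a set \<Rightarrow> ('a \<times> 'a) set \<Rightarrow> 'a \<Rightarrow> 'a \<Rightarrow> bool" where
  "covers P R p q \<longleftrightarrow> p \<in> P \<and> q \<in> P \<and> (p, q) \<in> R \<and> p \<noteq> q \<and>
     \<not> (\<exists>z\<in>P. z \<noteq> p \<and> z \<noteq> q \<and> (p, z) \<in> R \<and> (z, q) \<in> R)"

definition is_rank_function :: "'a set \<Rightarrow> ('a \<times> 'a) set \<Rightarrow> ('a \<Rightarrow> int) \<Rightarrow> bool" where
  "is_rank_function P R r \<longleftrightarrow> (\<forall>p q. covers P R p q \<longrightarrow> r p = r q - 1)"

definition minimal_elems :: "'a set \<Rightarrow> ('a \<times> 'a) set \<Rightarrow> 'a set" where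
  "minimal_elems P R = {p \<in> P. \<not> (\<exists>q\<in>P. q \<noteq> p \<and> (q, p) \<in> R)}"

definition maximal_elems :: "'a set \<Rightarrow> ('a \<times> 'a) set \<Rightarrow> 'a set" where
  "maximal_elems P R = {p \<in> P. \<not> (\<exists>q\<in>P. q \<noteq> p \<and> (p, q) \<in> R)}"

text \<open>The space R^(P - P*) is represented as the linear subspace of 'a \<Rightarrow> real
  of functions vanishing outside P - P*.\<close>

definition coord_space :: "'a set \<Rightarrow> ('a \<Rightarrow> real) set" where
  "coord_space U = {x. \<forall>a. a \<notin> U \<longrightarrow> x a = 0}"

definition marked_order_polytope ::
  "'a set \<Rightarrow> ('a \<times> 'a) set \<Rightarrow> 'a set \<Rightarrow> ('a \<Rightarrow> real) \<Rightarrow> ('a \<Rightarrow> real) set" where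
  "marked_order_polytope P R Pstar lam =
     {x \<in> coord_space (P - Pstar).
        \<forall>p q. covers P R p q \<longrightarrow>
          (if p \<in> Pstar then lam p else x p) \<le> (if q \<in> Pstar then lam q else x q)}"

definition interior_in_coords :: "'a set \<Rightarrow> ('a \<Rightarrow> real) set \<Rightarrow> ('a \<Rightarrow> real) set" where
  "interior_in_coords U K = (subtopology euclidean (coord_space U)) interior_of K"

definition lattice_points :: "'a set \<Rightarrow> ('a \<Rightarrow> real) set" where
  "lattice_points U = {x \<in> coord_space U. \<forall>a\<in>U. x a \<in> \<int>}"

end

theory Submission
  imports Defs
begin

lemma covers_converse: "covers P (R\<inverse>) p q = covers P R q p"
  unfolding covers_def by auto

lemma min_converse: "minimal_elems P (R\<inverse>) = maximal_elems P R"
  unfolding minimal_elems_def maximal_elems_def by auto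

lemma exists_cover_below:
  assumes fin: "finite P" and po: "partial_order_on P R"
  shows "(q, p) \<in> R \<Longrightarrow> q \<noteq> p \<Longrightarrow> \<exists>q'. covers P R q' p \<and> (q, q') \<in> R"
proof (induction "card {w\<in>P. (q,w)\<in>R \<and> (w,p)\<in>R}" arbitrary: q rule: less_induct)
  case less
  have sub: "R \<subseteq> P \<times> P" and tr: "trans R" and an: "antisym R" and rf: "refl_on P R"
    using partial_order_onD[OF po] by auto
  have qp: "q \<in> P" "p \<in> P" using less.prems sub by auto
  show ?case
  proof (cases "covers P R q p")
    case True
    then show ?thesis using rf qp unfolding refl_on_def by blast
  next
    case False
    then obtain z where z: "z \<in> P" "z \<noteq> q" "z \<noteq> p" "(q,z) \<in> R" "(z,p) \<in> R"
      using less.prems qp unfolding covers_def by blast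
    have ss: "{w\<in>P. (z,w)\<in>R \<and> (w,p)\<in>R} \<subset> {w\<in>P. (q,w)\<in>R \<and> (w,p)\<in>R}"
    proof
      show "{w\<in>P. (z,w)\<in>R \<and> (w,p)\<in>R} \<subseteq> {w\<in>P. (q,w)\<in>R \<and> (w,p)\<in>R}"
        using z tr unfolding trans_def by blast
      have "q \<notin> {w\<in>P. (z,w)\<in>R \<and> (w,p)\<in>R}" using z an unfolding antisym_def by blast
      moreover have "q \<in> {w\<in>P. (q,w)\<in>R \<and> (w,p)\<in>R}" using qp rf less.prems
        unfolding refl_on_def by blast
      ultimately show "{w\<in>P. (z,w)\<in>R \<and> (w,p)\<in>R} \<noteq> {w\<in>P. (q,w)\<in>R \<and> (w,p)\<in>R}" by blast
    qed
    have "card {w\<in>P. (z,w)\<in>R \<and> (w,p)\<in>R} < card {w\<in>P. (q,w)\<in>R \<and> (w,p)\<in>R}"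
      using psubset_card_mono[OF _ ss] fin by auto
    from less.hyps[OF this z(5) z(3)] obtain q' where "covers P R q' p" "(z,q') \<in> R" by blast
    then show ?thesis using z tr unfolding trans_def by blast
  qed
qed

lemma mono_bound:
  fixes g :: "'a \<Rightarrow> int"
  assumes fin: "finite P" and po: "partial_order_on P R"
    and cov: "\<And>p q. covers P R p q \<Longrightarrow> g p \<le> g q"
    and mins: "\<And>p. p \<in> minimal_elems P R \<Longrightarrow> 0 \<le> g p"
  shows "p \<in> P \<Longrightarrow> 0 \<le> g p"
proof (induction "card {w\<in>P. (w,p)\<in>R}" arbitrary: p rule: less_induct)
  case less
  have sub: "R \<subseteq> P \<times> P" and tr: "trans R" and an: "antisym R" and rf: "refl_on P R"
    using partial_order_onD[OF po] by auto
  show ?case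
  proof (cases "p \<in> minimal_elems P R")
    case True then show ?thesis using mins by blast
  next
    case False
    then obtain q where q: "q \<in> P" "q \<noteq> p" "(q,p) \<in> R"
      using less.prems unfolding minimal_elems_def by blast
    obtain q' where q': "covers P R q' p" using exists_cover_below[OF fin po q(3,2)] by blast
    have q'P: "q' \<in> P" "(q',p) \<in> R" "q' \<noteq> p" using q' unfolding covers_def by auto
    have ss: "{w\<in>P. (w,q')\<in>R} \<subset> {w\<in>P. (w,p)\<in>R}"
    proof
      show "{w\<in>P. (w,q')\<in>R} \<subseteq> {w\<in>P. (w,p)\<in>R}"
        using q'P tr unfolding trans_def by blast
      have "p \<notin> {w\<in>P. (w,q')\<in>R}" using q'P an unfolding antisym_def by blast
      moreover have "p \<in> {w\<in>P. (w,p)\<in>R}" using less.prems rf unfolding refl_on_def by blast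
      ultimately show "{w\<in>P. (w,q')\<in>R} \<noteq> {w\<in>P. (w,p)\<in>R}" by blast
    qed
    have "card {w\<in>P. (w,q')\<in>R} < card {w\<in>P. (w,p)\<in>R}"
      using psubset_card_mono[OF _ ss] fin by auto
    from less.hyps[OF this q'P(1)] have "0 \<le> g q'" .
    then show ?thesis using cov[OF q'] by simp
  qed
qed

lemma perturb:
  fixes V :: "('a \<Rightarrow> real) set"
  assumes "open V" "x \<in> V"
  shows "\<exists>e>0. \<forall>d. \<bar>d\<bar> < e \<longrightarrow> x(a := x a + d) \<in> V"
proof -
  have c: "continuous_on UNIV (\<lambda>d::real. x(a := x a + d))"
  proof (rule continuous_on_coordinatewise_then_product)
    fix i
    show "continuous_on UNIV (\<lambda>d::real. (x(a := x a + d)) i)"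
      by (cases "i = a") (auto intro!: continuous_intros)
  qed
  have o: "open ((\<lambda>d::real. x(a := x a + d)) -` V)"
    using open_vimage[OF assms(1) c] by simp
  have "0 \<in> (\<lambda>d::real. x(a := x a + d)) -` V" using assms(2) by simp
  then obtain e where "e > 0" "ball 0 e \<subseteq> (\<lambda>d::real. x(a := x a + d)) -` V"
    using o openE by blast
  then have "\<forall>d. \<bar>d\<bar> < e \<longrightarrow> x(a := x a + d) \<in> V"
    by (auto simp: dist_real_def subset_iff)
  then show ?thesis using \<open>e > 0\<close> by blast
qed

theorem proposition3p1:
  fixes P Pstar :: "'a set" and R :: "('a \<times> 'a) set" and r :: "'a \<Rightarrow> int"
  assumes "finite P"
    and "partial_order_on P R"
    and "is_rank_function P R r"
    and "Pstar \<subseteq> P"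
    and "minimal_elems P R \<union> maximal_elems P R \<subseteq> Pstar"
  shows "interior_in_coords (P - Pstar)
           (marked_order_polytope P R Pstar (\<lambda>a. real_of_int (r a)))
         \<inter> lattice_points (P - Pstar)
         = {(\<lambda>a. if a \<in> P - Pstar then real_of_int (r a) else 0)}"
proof -
  note fin = assms(1) and po = assms(2)
  define U where "U = P - Pstar"
  define K where "K = marked_order_polytope P R Pstar (\<lambda>a. real_of_int (r a))"
  define S where "S = coord_space U"
  define rp where "rp = (\<lambda>a. if a \<in> U then real_of_int (r a) else 0)"
  have rk: "\<And>p q. covers P R p q \<Longrightarrow> r p = r q - 1"
    using assms(3) unfolding is_rank_function_def by blast
  have covP: "\<And>p q. covers P R p q \<Longrightarrow> p \<in> P \<and> q \<in> P \<and> p \<noteq> q"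
    unfolding covers_def by auto
  have finU: "finite U" using fin U_def by simp
  have Kdef: "\<And>x. x \<in> K \<longleftrightarrow> x \<in> S \<and> (\<forall>p q. covers P R p q \<longrightarrow>
          (if p \<in> Pstar then real_of_int (r p) else x p) \<le> (if q \<in> Pstar then real_of_int (r q) else x q))"
    unfolding K_def S_def U_def marked_order_polytope_def by auto
  have Sdef: "\<And>x. x \<in> S \<longleftrightarrow> (\<forall>a. a \<notin> U \<longrightarrow> x a = 0)"
    unfolding S_def coord_space_def by auto
  define V where "V = (\<Inter>a\<in>U. {x::'a\<Rightarrow>real. \<bar>x a - real_of_int (r a)\<bar> < 1/2})"
  have oa: "open {x::'a\<Rightarrow>real. \<bar>x a - real_of_int (r a)\<bar> < 1/2}" for a
  proof (rule open_Collect_less)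
    show "continuous_on UNIV (\<lambda>x::'a\<Rightarrow>real. \<bar>x a - real_of_int (r a)\<bar>)"
      by (intro continuous_intros continuous_on_product_coordinates)
  qed (auto intro: continuous_intros)
  have oV: "open V"
    unfolding V_def using finU oa by blast
  have VS: "V \<inter> S \<subseteq> K"
  proof
    fix x assume x: "x \<in> V \<inter> S"
    show "x \<in> K" unfolding Kdef
    proof (intro conjI allI impI)
      show "x \<in> S" using x by blast
      fix p q assume c: "covers P R p q"
      have "r p = r q - 1" using rk[OF c] .
      moreover have "p \<notin> Pstar \<Longrightarrow> x p < real_of_int (r p) + 1/2"
      proof -
        assume "p \<notin> Pstar"
        then have "\<bar>x p - real_of_int (r p)\<bar> < 1/2"
          using x covP[OF c] unfolding V_def U_def by auto
        then show ?thesis by (simp only: abs_less_iff) linarith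
      qed
      moreover have "q \<notin> Pstar \<Longrightarrow> real_of_int (r q) - 1/2 < x q"
      proof -
        assume "q \<notin> Pstar"
        then have "\<bar>x q - real_of_int (r q)\<bar> < 1/2"
          using x covP[OF c] unfolding V_def U_def by auto
        then show ?thesis by (simp only: abs_less_iff) linarith
      qed
      ultimately show "(if p \<in> Pstar then real_of_int (r p) else x p) \<le> (if q \<in> Pstar then real_of_int (r q) else x q)"
        by (auto split: if_splits simp: abs_less_iff)
    qed
  qed
  have opVS: "openin (subtopology euclidean S) (V \<inter> S)"
    using oV by (auto simp: openin_subtopology)
  have rpV: "rp \<in> V \<inter> S" unfolding V_def rp_def using Sdef by auto
  have rpI: "rp \<in> subtopology euclidean S interior_of K"
    using interior_of_maximal[OF VS opVS] rpV by blast
  have rpL: "rp \<in> lattice_points U"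
    unfolding lattice_points_def coord_space_def rp_def by auto
  have uniq: "x = rp" if xI: "x \<in> subtopology euclidean S interior_of K" and xL: "x \<in> lattice_points U" for x
  proof -
    obtain T where T: "openin (subtopology euclidean S) T" "x \<in> T" "T \<subseteq> K"
      using xI unfolding interior_of_def by blast
    obtain W where W: "open W" "T = W \<inter> S" using T(1) by (auto simp: openin_subtopology)
    have xS: "x \<in> S" using T W by blast
    define xx where "xx = (\<lambda>a. if a \<in> Pstar then real_of_int (r a) else x a)"
    have strict: "xx p < xx q" if c: "covers P R p q" for p q
    proof (rule ccontr)
      assume ne: "\<not> xx p < xx q"
      have le: "xx p \<le> xx q" using T(2,3) Kdef c unfolding xx_def by blast
      show False
      proof (cases "p \<in> Pstar")
        case pS: True
        show ?thesis
        proof (cases "q \<in> Pstar")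
          case True then show ?thesis using pS ne rk[OF c] unfolding xx_def by simp
        next
          case qU: False
          obtain e where e: "e > 0" "\<And>d. \<bar>d\<bar> < e \<Longrightarrow> x(q := x q + d) \<in> W"
            using perturb[OF W(1)] T(2) W(2) by blast
          let ?y = "x(q := x q + - (e/2))"
          have "?y \<in> S" using xS qU covP[OF c] Sdef unfolding U_def by auto
          moreover have "?y \<in> W" using e(2)[of "- (e/2)"] e(1) by simp
          ultimately have "?y \<in> K" using T W by blast
          then have "(if p \<in> Pstar then real_of_int (r p) else ?y p) \<le> (if q \<in> Pstar then real_of_int (r q) else ?y q)"
            using Kdef c by blast
          then show False using pS qU le ne e covP[OF c] unfolding xx_def by auto
        qed
      next
        case pU: False
        obtain e where e: "e > 0" "\<And>d. \<bar>d\<bar> < e \<Longrightarrow> x(p := x p + d) \<in> W"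
          using perturb[OF W(1)] T(2) W(2) by blast
        let ?y = "x(p := x p + e/2)"
        have "?y \<in> S" using xS pU covP[OF c] Sdef unfolding U_def by auto
        moreover have "?y \<in> W" using e by simp
        ultimately have "?y \<in> K" using T W by blast
        then have "(if p \<in> Pstar then real_of_int (r p) else ?y p) \<le> (if q \<in> Pstar then real_of_int (r q) else ?y q)"
          using Kdef c by blast
        then show False using pU le ne e covP[OF c] unfolding xx_def by (auto split: if_splits)
      qed
    qed
    have xint: "xx a \<in> \<int>" if "a \<in> P" for a
      using xL that unfolding xx_def lattice_points_def U_def by auto
    define z where "z = (\<lambda>a. \<lfloor>xx a\<rfloor>)"
    have zx: "real_of_int (z a) = xx a" if "a \<in> P" for a
      using xint[OF that] unfolding z_def by (metis Ints_cases floor_of_int)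
    have zc: "z p + 1 \<le> z q" if c: "covers P R p q" for p q
    proof -
      have "real_of_int (z p) < real_of_int (z q)" using strict[OF c] zx covP[OF c] by simp
      then show ?thesis by linarith
    qed
    define g where "g = (\<lambda>a. z a - r a)"
    have gc: "g p \<le> g q" if c: "covers P R p q" for p q
      using zc[OF c] rk[OF c] unfolding g_def by simp
    have gS: "g a = 0" if "a \<in> Pstar" for a
    proof -
      have "a \<in> P" using that assms(4) by blast
      then show ?thesis using zx[of a] that unfolding g_def xx_def by simp
    qed
    have lo: "0 \<le> g p" if "p \<in> P" for p
      by (rule mono_bound[OF fin po gc]) (use gS assms(5) that in auto)
    have po': "partial_order_on P (R\<inverse>)" using po by simp
    have hi: "0 \<le> - g p" if "p \<in> P" for p
    proof (rule mono_bound[OF fin po', where g = "\<lambda>a. - g a"])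
      fix p q assume "covers P (R\<inverse>) p q"
      then show "- g p \<le> - g q" using gc covers_converse by fastforce
    next
      fix p assume "p \<in> minimal_elems P (R\<inverse>)"
      then show "0 \<le> - g p" using gS assms(5) min_converse by fastforce
    qed (rule that)
    show "x = rp"
    proof
      fix a
      show "x a = rp a"
      proof (cases "a \<in> U")
        case True
        then have aP: "a \<in> P" "a \<notin> Pstar" unfolding U_def by auto
        have "g a = 0" using lo[OF aP(1)] hi[OF aP(1)] by simp
        then show ?thesis using zx[OF aP(1)] aP True unfolding g_def xx_def rp_def by simp
      next
        case False then show ?thesis using xS Sdef unfolding rp_def by simp
      qed
    qed
  qed
  have "subtopology euclidean S interior_of K \<inter> lattice_points U = {rp}"
    using rpI rpL uniq by blast
  then show ?thesis unfolding interior_in_coords_def K_def S_def U_def rp_def .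
qed

end
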